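(* For each of the four boundary points of $P_2$ — top-left (NW), top-right (NE), bottom-left (SW), bottom-right (SE) — let $\beta_{\mathrm{NW}},\beta_{\mathrm{NE}},\beta_{\mathrm{SW}},\beta_{\mathrm{SE}}:P_2\to P_2$ be the chain map obtained by stacking on $P_2$ (above it for NW, NE; below it for SW, SE) the identity cobordism of $\mathbb 1$ with a single dot on the strand ending at that boundary point. These are chain maps, and $$\beta_{\mathrm{NW}}\simeq\beta_{\mathrm{SW}}\simeq-\beta_{\mathrm{NE}}\simeq-\beta_{\mathrm{SE}}$$ (chain homotopic), where $\beta_{\mathrm{NW}}$ is the map $b$ (dot on the left strand on $C_0$ and $x_{\mathrm{top}}$ on each $C_n$, $n\ge1$).
   Context: $P_2\in\mathrm{Kom}(2)$ is the complex with $C_0=\mathbb 1$, $C_n=q^{2n-1}e_1$ ($n\ge1$, homological degree $n$), $d_0=s$, $d_n=x_{\mathrm{top}}-x_{\mathrm{bot}}$ ($n$ odd), $d_n=x_{\mathrm{top}}+x_{\mathrm{bot}}$ ($n\ge2$ even), in Bar-Natan's dotted cobordism category over $\mathbb Z[\alpha]$ (relations: sphere $=0$, one-dotted sphere $=1$, two-dotted sphere $=0$, three-dotted sphere $=\alpha$, neck-cutting: a cylinder equals the sum of the two compressions with a dot on one side or the other). $\mathbb 1$ = two vertical strands, $e_1$ = cap over cup, $s$ the saddle, $x_{\mathrm{top}},x_{\mathrm{bot}}$ the dotted identities on the top/bottom arc of $e_1$. *)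

theory Defs
  imports "HOL-Computational_Algebra.Polynomial"
begin

text \<open>Concrete model of the relevant part of Bar-Natan's dotted cobordism category
  over Z[alpha] (alpha = the polynomial variable of int poly), restricted to the two
  crossingless 4-ended tangles One (two vertical strands) and E (= e_1, cap over cup).

  Every Hom space is free over Z[alpha]:
   Hom(One,One) = Z[alpha][x1,x2]/(x1^2-alpha, x2^2-alpha), x1 = dot on left strand,
                  x2 = dot on right strand (closure = two circles, A tensor A);
   Hom(E,E)     = Z[alpha][x1,x2]/(x1^2-alpha, x2^2-alpha), x1 = x_top, x2 = x_bot;
   Hom(One,E)   = span{s, s x}, Hom(E,One) = span{s', s' x}, x = a dot anywhere on the
                  (connected) saddle surface, x^2 = alpha.
  A morphism is stored as its coefficient function f a b = coefficient of x1^a x2^b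
  (for the mixed Hom spaces only the entries f a False are used: coefficient of s x^a).
  Composition uses neck-cutting: s' s = x_l + x_r and s s' = x_top + x_bot.\<close>

datatype obj = One | E

type_synonym mor = "bool \<Rightarrow> bool \<Rightarrow> int poly"

definition alpha :: "int poly" where "alpha = [:0, 1:]"

definition bn :: "bool \<Rightarrow> nat" where "bn a = (if a then 1 else 0)"

definition mzero :: mor where "mzero = (\<lambda>a b. 0)"
definition madd :: "mor \<Rightarrow> mor \<Rightarrow> mor" where "madd f g = (\<lambda>a b. f a b + g a b)"
definition mneg :: "mor \<Rightarrow> mor" where "mneg f = (\<lambda>a b. - f a b)"
definition msub :: "mor \<Rightarrow> mor \<Rightarrow> mor" where "msub f g = (\<lambda>a b. f a b - g a b)"

text \<open>multiplication in Z[alpha][x1,x2]/(x1^2-alpha,x2^2-alpha)\<close>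
definition mult2 :: "mor \<Rightarrow> mor \<Rightarrow> mor" where
  "mult2 g f = (\<lambda>a b. \<Sum>a1\<in>UNIV. \<Sum>b1\<in>UNIV.
      alpha ^ (bn (a1 \<and> (a1 \<noteq> a)) + bn (b1 \<and> (b1 \<noteq> b))) * g a1 b1 * f (a1 \<noteq> a) (b1 \<noteq> b))"

definition clean :: "mor \<Rightarrow> mor" where
  "clean f = (\<lambda>a b. if b then 0 else f a False)"

text \<open>multiplication of one-variable elements (x^2 = alpha)\<close>
definition mult1 :: "mor \<Rightarrow> mor \<Rightarrow> mor" where
  "mult1 g f = mult2 (clean g) (clean f)"

text \<open>identify x1 = x2 = x (absorbing an endomorphism into a saddle)\<close>
definition coll :: "mor \<Rightarrow> mor" where
  "coll f = (\<lambda>c d. if d then 0 else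
      (\<Sum>a\<in>UNIV. \<Sum>b\<in>UNIV. if (a \<noteq> b) = c then alpha ^ bn (a \<and> b) * f a b else 0))"

text \<open>p0 + p1 x  (on a saddle-composite) \<mapsto> p0 (x1 + x2) + p1 (alpha + x1 x2)
  (neck-cutting)\<close>
definition neck :: "mor \<Rightarrow> mor" where
  "neck p = (\<lambda>a b. if a = b then (if a then p True False else alpha * p True False)
                    else p False False)"

text \<open>comp A B C g f = g \<circ> f for f : A \<rightarrow> B, g : B \<rightarrow> C\<close>
definition comp :: "obj \<Rightarrow> obj \<Rightarrow> obj \<Rightarrow> mor \<Rightarrow> mor \<Rightarrow> mor" where
  "comp A B C g f =
     (if A = B \<and> B = C then mult2 g f
      else if A = B then mult1 g (coll f)
      else if B = C then mult1 (coll g) f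
      else neck (mult1 g f))"

definition mor_ok :: "obj \<Rightarrow> obj \<Rightarrow> mor \<Rightarrow> bool" where
  "mor_ok A B f = (A \<noteq> B \<longrightarrow> (\<forall>a. f a True = 0))"

text \<open>q-degrees: dot -2, saddle -1, alpha -4; a map C \<rightarrow> D between shifted objects
  q^sA A, q^sB B has degree deg(cobordism) + sB - sA.\<close>
definition basisdeg :: "obj \<Rightarrow> obj \<Rightarrow> bool \<Rightarrow> bool \<Rightarrow> int" where
  "basisdeg A B a b = (if A = B then - 2 * int (bn a + bn b) else - 1 - 2 * int (bn a))"

definition homog :: "obj \<Rightarrow> obj \<Rightarrow> int \<Rightarrow> int \<Rightarrow> int \<Rightarrow> mor \<Rightarrow> bool" where
  "homog A B sA sB k f = (\<forall>a b i. coeff (f a b) i \<noteq> 0 \<longrightarrow>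
      basisdeg A B a b - 4 * int i + sB - sA = k)"

definition idm :: mor where "idm = (\<lambda>a b. if \<not> a \<and> \<not> b then 1 else 0)"
definition saddle :: mor where "saddle = idm"  \<comment> \<open>s : One \<rightarrow> E\<close>
definition dot1 :: mor where "dot1 = (\<lambda>a b. if a \<and> \<not> b then 1 else 0)"
  \<comment> \<open>x_l on One, x_top on E\<close>
definition dot2 :: mor where "dot2 = (\<lambda>a b. if \<not> a \<and> b then 1 else 0)"
  \<comment> \<open>x_r on One, x_bot on E\<close>

definition cobj :: "nat \<Rightarrow> obj" where "cobj n = (if n = 0 then One else E)"
definition qsh :: "nat \<Rightarrow> int" where "qsh n = (if n = 0 then 0 else 2 * int n - 1)"
definition dP :: "nat \<Rightarrow> mor" where
  "dP n = (if n = 0 then saddle else if odd n then msub dot1 dot2 else madd dot1 dot2)"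

definition chain_map :: "(nat \<Rightarrow> mor) \<Rightarrow> bool" where
  "chain_map f = (\<forall>n. comp (cobj n) (cobj (Suc n)) (cobj (Suc n)) (f (Suc n)) (dP n)
                     = comp (cobj n) (cobj n) (cobj (Suc n)) (dP n) (f n))"

text \<open>f \<simeq> g via a homotopy h (h n : C_n \<rightarrow> C_(n-1)) homogeneous of q-degree k\<close>
definition homotopic :: "(nat \<Rightarrow> mor) \<Rightarrow> (nat \<Rightarrow> mor) \<Rightarrow> int \<Rightarrow> bool" where
  "homotopic f g k = (\<exists>h. (\<forall>n\<ge>1. mor_ok (cobj n) (cobj (n - 1)) (h n)
                              \<and> homog (cobj n) (cobj (n - 1)) (qsh n) (qsh (n - 1)) k (h n))
      \<and> msub (f 0) (g 0) = comp One E One (h 1) (dP 0)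
      \<and> (\<forall>n\<ge>1. msub (f n) (g n) =
            madd (comp (cobj n) (cobj (n - 1)) (cobj n) (dP (n - 1)) (h n))
                 (comp (cobj n) (cobj (Suc n)) (cobj n) (h (Suc n)) (dP n))))"

datatype corner = NW | NE | SW | SE

text \<open>stacking the dotted identity of One (dot on the strand ending at corner c) on P_2:
  on C_0 = One the dot sits on the left/right strand, on C_n = e_1 it sits on the
  top arc (NW, NE: stacked above) or bottom arc (SW, SE: stacked below).\<close>
definition beta :: "corner \<Rightarrow> nat \<Rightarrow> mor" where
  "beta c n = (if n = 0 then (if c = NW \<or> c = SW then dot1 else dot2)
               else (if c = NW \<or> c = NE then dot1 else dot2))"

definition bmap :: "nat \<Rightarrow> mor" where
  "bmap n = (if n = 0 then dot1 else dot1)"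

end

theory Submission
  imports Defs
begin

lemma sum_bool: "(\<Sum>a\<in>(UNIV::bool set). f a) = f True + f False"
  by (simp add: UNIV_bool add.commute)

lemmas U = sum_bool mult2_def mult1_def clean_def coll_def neck_def madd_def msub_def mneg_def
  idm_def dot1_def dot2_def saddle_def bn_def comp_def fun_eq_iff

lemma cm: "chain_map (beta c)"
  unfolding chain_map_def
proof
  fix n
  show "comp (cobj n) (cobj (Suc n)) (cobj (Suc n)) (beta c (Suc n)) (dP n)
                     = comp (cobj n) (cobj n) (cobj (Suc n)) (dP n) (beta c n)"
    by (cases c; cases "n = 0"; simp add: beta_def cobj_def dP_def U algebra_simps)
qed

definition h1 :: "nat \<Rightarrow> mor" where "h1 n = (if even n then idm else mzero)"
definition h2 :: "nat \<Rightarrow> mor" where "h2 n = (if odd n then idm else mzero)"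
definition h3 :: "nat \<Rightarrow> mor" where "h3 n = (if even n then mneg idm else mzero)"

lemma qsh_m: "n \<ge> 2 \<Longrightarrow> qsh (n - 1) - qsh n = -2"
  by (auto simp: qsh_def)

lemma homog_idm: "n \<ge> Suc 0 \<Longrightarrow> homog (cobj n) (cobj (n - Suc 0)) (qsh n) (qsh (n - Suc 0)) (-2) idm"
  using qsh_m[of n] by (cases "n = 1") (auto simp: homog_def idm_def basisdeg_def cobj_def bn_def qsh_def)

lemma homog_nidm: "n \<ge> Suc 0 \<Longrightarrow> homog (cobj n) (cobj (n - Suc 0)) (qsh n) (qsh (n - Suc 0)) (-2) (mneg idm)"
  using qsh_m[of n] by (cases "n = 1") (auto simp: homog_def idm_def mneg_def basisdeg_def cobj_def bn_def qsh_def)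

lemma homog_zero: "homog A B x y k mzero"
  by (auto simp: homog_def mzero_def)

lemma ok_all: "mor_ok A B idm" "mor_ok A B (mneg idm)" "mor_ok A B mzero"
  by (auto simp: mor_ok_def idm_def mneg_def mzero_def)

lemma ncases: "(n::nat) \<ge> 1 \<Longrightarrow> (n = 1 \<Longrightarrow> P) \<Longrightarrow> (n \<ge> 2 \<Longrightarrow> even n \<Longrightarrow> P) \<Longrightarrow> (n \<ge> 2 \<Longrightarrow> odd n \<Longrightarrow> P) \<Longrightarrow> P"
  by force

lemma hom1: "homotopic (beta NW) (beta SW) (-2)"
  unfolding homotopic_def
proof (intro exI[of _ h1] conjI allI impI)
  fix n :: nat assume "n \<ge> 1"
  thus "mor_ok (cobj n) (cobj (n - 1)) (h1 n)"
    by (auto simp: h1_def ok_all)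
next
  fix n :: nat assume "n \<ge> 1"
  thus "homog (cobj n) (cobj (n - 1)) (qsh n) (qsh (n - 1)) (-2) (h1 n)"
    by (auto simp: h1_def homog_zero homog_idm)
next
  show "msub (beta NW 0) (beta SW 0) = comp One E One (h1 1) (dP 0)"
    by (simp add: beta_def h1_def dP_def mzero_def U)
next
  fix n :: nat assume n: "n \<ge> 1"
  show "msub (beta NW n) (beta SW n) =
            madd (comp (cobj n) (cobj (n - 1)) (cobj n) (dP (n - 1)) (h1 n))
                 (comp (cobj n) (cobj (Suc n)) (cobj n) (h1 (Suc n)) (dP n))"
    using n by (rule ncases) (auto simp: beta_def h1_def dP_def cobj_def mzero_def U)
qed

lemma hom2: "homotopic (beta SW) (\<lambda>n. mneg (beta NE n)) (-2)"
  unfolding homotopic_def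
proof (intro exI[of _ h2] conjI allI impI)
  fix n :: nat assume "n \<ge> 1"
  thus "mor_ok (cobj n) (cobj (n - 1)) (h2 n)"
    by (auto simp: h2_def ok_all)
next
  fix n :: nat assume "n \<ge> 1"
  thus "homog (cobj n) (cobj (n - 1)) (qsh n) (qsh (n - 1)) (-2) (h2 n)"
    by (auto simp: h2_def homog_zero homog_idm)
next
  show "msub (beta SW 0) (mneg (beta NE 0)) = comp One E One (h2 1) (dP 0)"
    by (simp add: beta_def h2_def dP_def mzero_def U)
next
  fix n :: nat assume n: "n \<ge> 1"
  show "msub (beta SW n) (mneg (beta NE n)) =
            madd (comp (cobj n) (cobj (n - 1)) (cobj n) (dP (n - 1)) (h2 n))
                 (comp (cobj n) (cobj (Suc n)) (cobj n) (h2 (Suc n)) (dP n))"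
    using n by (rule ncases) (auto simp: beta_def h2_def dP_def cobj_def mzero_def U)
qed

lemma hom3: "homotopic (\<lambda>n. mneg (beta NE n)) (\<lambda>n. mneg (beta SE n)) (-2)"
  unfolding homotopic_def
proof (intro exI[of _ h3] conjI allI impI)
  fix n :: nat assume "n \<ge> 1"
  thus "mor_ok (cobj n) (cobj (n - 1)) (h3 n)"
    by (auto simp: h3_def ok_all)
next
  fix n :: nat assume "n \<ge> 1"
  thus "homog (cobj n) (cobj (n - 1)) (qsh n) (qsh (n - 1)) (-2) (h3 n)"
    by (auto simp: h3_def homog_zero homog_nidm)
next
  show "msub (mneg (beta NE 0)) (mneg (beta SE 0)) = comp One E One (h3 1) (dP 0)"
    by (simp add: beta_def h3_def dP_def mzero_def U)
next
  fix n :: nat assume n: "n \<ge> 1"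
  show "msub (mneg (beta NE n)) (mneg (beta SE n)) =
            madd (comp (cobj n) (cobj (n - 1)) (cobj n) (dP (n - 1)) (h3 n))
                 (comp (cobj n) (cobj (Suc n)) (cobj n) (h3 (Suc n)) (dP n))"
    using n by (rule ncases) (auto simp: beta_def h3_def dP_def cobj_def mzero_def U)
qed

theorem mainTheorem9:
  shows "(\<forall>c. chain_map (beta c))
    \<and> homotopic (beta NW) (beta SW) (-2)
    \<and> homotopic (beta SW) (\<lambda>n. mneg (beta NE n)) (-2)
    \<and> homotopic (\<lambda>n. mneg (beta NE n)) (\<lambda>n. mneg (beta SE n)) (-2)
    \<and> beta NW = bmap"
  using cm hom1 hom2 hom3 by (auto simp: beta_def bmap_def fun_eq_iff)

end
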